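(* Let $p_1,p_2\in\mathbb{N}$. Let $(\mathfrak{X}_{11},\mathfrak{X}_{22})$ and $(\mathfrak{X}^\star_{11},\mathfrak{X}^\star_{22})$ be random pairs on $\mathcal{S}_{++}^{p_1}\times\mathcal{S}_{++}^{p_2}$ with identical marginal distributions (i.e., $\mathfrak{X}_{11}\overset{d}{=}\mathfrak{X}^\star_{11}$ and $\mathfrak{X}_{22}\overset{d}{=}\mathfrak{X}^\star_{22}$). Suppose $\mathfrak{X}^\star_{11}$ and $\mathfrak{X}^\star_{22}$ are independent and $(\mathfrak{X}_{11},\mathfrak{X}_{22})\preceq_{\mathrm{Lt}}(\mathfrak{X}^\star_{11},\mathfrak{X}^\star_{22})$. If $f:\mathcal{S}_{++}^{p_1}\to[0,\infty)$ and $g:\mathcal{S}_{++}^{p_2}\to[0,\infty)$ are matrix-variate Bernstein functions with triplets $(A_1,0,\mu_1)$ and $(A_2,0,\mu_2)$ respectively, then \[\mathbb{E}\{f(\mathfrak{X}_{11})g(\mathfrak{X}_{22})\}\ge\mathbb{E}\{f(\mathfrak{X}^\star_{11})\}\,\mathbb{E}\{g(\mathfrak{X}^\star_{22})\},\] provided that the expectations are finite.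
   Context: $\mathcal{S}_+^q$, $\mathcal{S}_{++}^q$: symmetric nonnegative definite / positive definite real $q\times q$ matrices; $\mathrm{etr}(\cdot)=\exp\{\mathrm{tr}(\cdot)\}$. A map $g:\mathcal{S}_{++}^q\to[0,\infty)$ is a matrix-variate Bernstein function with triplet $(A,B,\mu)$ if $A,B\in\mathcal{S}_+^q$, $\mu$ is a measure on $\mathcal{S}_{++}^q$ with $\int_{\mathcal{S}_{++}^q}\min[1,\{\mathrm{tr}(X^2)\}^{1/2}]\,\mu(\mathrm{d}X)<\infty$, and $g(T)=\mathrm{tr}(A)+\mathrm{tr}(BT)+\int_{\mathcal{S}_{++}^q}\{1-\mathrm{etr}(-TX)\}\,\mu(\mathrm{d}X)$ for all $T\in\mathcal{S}_{++}^q$. For random pairs on $\mathcal{S}_+^{p_1}\times\mathcal{S}_+^{p_2}$, $(\mathfrak{X}_1,\mathfrak{X}_2)\preceq_{\mathrm{Lt}}(\mathfrak{Y}_1,\mathfrak{Y}_2)$ means $\mathbb{E}\{\mathrm{etr}(-T_1\mathfrak{X}_1)\mathrm{etr}(-T_2\mathfrak{X}_2)\}\ge\mathbb{E}\{\mathrm{etr}(-T_1\mathfrak{Y}_1)\mathrm{etr}(-T_2\mathfrak{Y}_2)\}$ for all $T_1\in\mathcal{S}_+^{p_1}$, $T_2\in\mathcal{S}_+^{p_2}$. *)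

theory Defs
  imports "HOL-Analysis.Analysis" "HOL-Probability.Probability"
begin

definition psd_mat :: "real^'n^'n \<Rightarrow> bool" where
  "psd_mat A \<longleftrightarrow> transpose A = A \<and> (\<forall>x. 0 \<le> x \<bullet> (A *v x))"

definition pd_mat :: "real^'n^'n \<Rightarrow> bool" where
  "pd_mat A \<longleftrightarrow> transpose A = A \<and> (\<forall>x. x \<noteq> 0 \<longrightarrow> 0 < x \<bullet> (A *v x))"

definition etr :: "real^'n^'n \<Rightarrow> real" where
  "etr X = exp (trace X)"

definition mv_bernstein ::
  "(real^'n^'n \<Rightarrow> real) \<Rightarrow> real^'n^'n \<Rightarrow> real^'n^'n \<Rightarrow> (real^'n^'n) measure \<Rightarrow> bool" where
  "mv_bernstein g A B \<mu> \<longleftrightarrow>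
     psd_mat A \<and> psd_mat B \<and>
     sets \<mu> = sets borel \<and>
     emeasure \<mu> {X. \<not> pd_mat X} = 0 \<and>
     (\<integral>\<^sup>+ X. ennreal (min 1 (sqrt (trace (X ** X)))) \<partial>\<mu>) < \<infinity> \<and>
     (\<forall>T. pd_mat T \<longrightarrow>
        g T = trace A + trace (B ** T) + (\<integral>X. (1 - etr (- (T ** X))) \<partial>\<mu>))"

definition lt_order ::
  "'a measure \<Rightarrow> ('a \<Rightarrow> real^'p^'p) \<Rightarrow> ('a \<Rightarrow> real^'q^'q) \<Rightarrow>
   'b measure \<Rightarrow> ('b \<Rightarrow> real^'p^'p) \<Rightarrow> ('b \<Rightarrow> real^'q^'q) \<Rightarrow> bool" where
  "lt_order M X1 X2 N Y1 Y2 \<longleftrightarrow>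
     (\<forall>T1 T2. psd_mat T1 \<longrightarrow> psd_mat T2 \<longrightarrow>
        (\<integral>x. etr (- (T1 ** X1 x)) * etr (- (T2 ** X2 x)) \<partial>M)
          \<ge> (\<integral>y. etr (- (T1 ** Y1 y)) * etr (- (T2 ** Y2 y)) \<partial>N))"

text \<open>Independence of two random variables with possibly different value spaces
  (the library's indep_var requires equal types), stated via events.\<close>
definition indep_rv :: "'a measure \<Rightarrow> 'c measure \<Rightarrow> ('a \<Rightarrow> 'c) \<Rightarrow> 'd measure \<Rightarrow> ('a \<Rightarrow> 'd) \<Rightarrow> bool" where
  "indep_rv M Ma X Mb Y \<longleftrightarrow>
     (\<forall>A\<in>sets Ma. \<forall>B\<in>sets Mb.
        measure M (X -` A \<inter> Y -` B \<inter> space M) =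
          measure M (X -` A \<inter> space M) * measure M (Y -` B \<inter> space M))"

end

theory Submission
  imports Defs
begin

lemma vec_nth_meas[measurable]:
  fixes f :: "'a \<Rightarrow> 'b::topological_space^'n"
  shows "f \<in> borel_measurable M \<Longrightarrow> (\<lambda>x. f x $ i) \<in> borel_measurable M"
  by (rule borel_measurable_continuous_on[where f="\<lambda>v. v $ i"]) (auto intro: continuous_on_component continuous_on_id)

lemma psd_sym:
  assumes "psd_mat X" shows "x \<bullet> (X *v y) = y \<bullet> (X *v x)"
proof -
  have "x \<bullet> (X *v y) = (x v* X) \<bullet> y" by (simp add: dot_lmul_matrix)
  also have "x v* X = transpose X *v x" by (simp add: transpose_matrix_vector)
  also have "transpose X = X" using assms by (simp add: psd_mat_def)
  finally show ?thesis by (simp add: inner_commute)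
qed

lemma mv_scaleR: "X *v (t *\<^sub>R y) = t *\<^sub>R (X *v (y::real^'n)) "
  by (simp add: vec_eq_iff matrix_vector_mult_def sum_distrib_left algebra_simps)

lemma quad_expand:
  fixes x y :: "real^'n" and X :: "real^'n^'n"
  shows "(x + t *\<^sub>R y) \<bullet> (X *v (x + t *\<^sub>R y)) =
     x \<bullet> (X *v x) + t * (x \<bullet> (X *v y)) + t * (y \<bullet> (X *v x)) + t^2 * (y \<bullet> (X *v y))"
  unfolding matrix_vector_right_distrib mv_scaleR
  by (simp add: inner_add_left inner_add_right power2_eq_square algebra_simps)

lemma psd_cs:
  assumes X: "psd_mat X"
  shows "(y \<bullet> (X *v x))^2 \<le> (x \<bullet> (X *v x)) * (y \<bullet> (X *v y))"
proof -
  define a b c where "a = x \<bullet> (X *v x)" "b = y \<bullet> (X *v x)" "c = y \<bullet> (X *v y)"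
  have q: "0 \<le> a + 2 * t * b + t^2 * c" for t
  proof -
    have "0 \<le> (x + t *\<^sub>R y) \<bullet> (X *v (x + t *\<^sub>R y))" using X by (simp add: psd_mat_def)
    also have "\<dots> = a + 2 * t * b + t^2 * c"
      unfolding quad_expand a_b_c_def psd_sym[OF X, of x y] by simp
    finally show ?thesis .
  qed
  have c0: "0 \<le> c" using X by (simp add: psd_mat_def a_b_c_def)
  have a0: "0 \<le> a" using X by (simp add: psd_mat_def a_b_c_def)
  show ?thesis
  proof (cases "c = 0")
    case True
    have "b = 0"
    proof (rule ccontr)
      assume "b \<noteq> 0"
      have "0 \<le> a + 2 * (-(a+1)/(2*b)) * b" using q[of "-(a+1)/(2*b)"] True by simp
      also have "\<dots> = -1" using \<open>b \<noteq> 0\<close> by (simp add: field_simps)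
      finally show False by simp
    qed
    then show ?thesis using True a_b_c_def by simp
  next
    case False
    then have cp: "0 < c" using c0 by simp
    have "0 \<le> a + 2 * (-b/c) * b + (-b/c)^2 * c" using q .
    also have "\<dots> = a - b^2 / c" using cp by (simp add: field_simps power2_eq_square)
    finally have "b^2 / c \<le> a" by simp
    then have "b^2 \<le> a * c" using cp by (simp add: field_simps)
    then show ?thesis by (simp add: a_b_c_def)
  qed
qed

lemma psd_kernel:
  assumes X: "psd_mat X" and "x \<bullet> (X *v x) = 0" shows "X *v x = 0"
proof -
  have "((X *v x) \<bullet> (X *v x))^2 \<le> 0" using psd_cs[OF X, where x=x and y="X *v x"] assms(2) by simp
  then have "(X *v x) \<bullet> (X *v x) \<le> 0" by (simp add: power2_eq_square mult_le_0_iff)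
  then show ?thesis by (metis antisym inner_ge_zero inner_eq_zero_iff)
qed

lemma pd_iff:
  fixes X :: "real^'n^'n"
  shows "pd_mat X \<longleftrightarrow> psd_mat X \<and> det X \<noteq> 0"
proof
  assume pd: "pd_mat X"
  have psd: "psd_mat X" using pd unfolding pd_mat_def psd_mat_def
    by (metis inner_zero_left order_le_less)
  moreover have "det X \<noteq> 0"
  proof
    assume "det X = 0"
    then have "\<not> invertible X" by (simp add: invertible_det_nz)
    then obtain x where "X *v x = 0" "x \<noteq> 0"
      using invertible_left_inverse matrix_left_invertible_ker by metis
    then show False using pd by (auto simp: pd_mat_def)
  qed
  ultimately show "psd_mat X \<and> det X \<noteq> 0" by simp
next
  assume h: "psd_mat X \<and> det X \<noteq> 0"
  then have ker: "\<forall>x. X *v x = 0 \<longrightarrow> x = 0"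
    using invertible_left_inverse matrix_left_invertible_ker invertible_det_nz by metis
  show "pd_mat X" unfolding pd_mat_def
  proof (intro conjI allI impI)
    show "transpose X = X" using h by (simp add: psd_mat_def)
    fix x :: "real^'n" assume "x \<noteq> 0"
    have "0 \<le> x \<bullet> (X *v x)" using h by (simp add: psd_mat_def)
    moreover have "x \<bullet> (X *v x) \<noteq> 0" using psd_kernel[of X x] h ker \<open>x \<noteq> 0\<close> by auto
    ultimately show "0 < x \<bullet> (X *v x)" by simp
  qed
qed

lemma mv_axis: "((U::real^'n^'n) *v axis k 1) $ i = U $ i $ k"
  by (simp add: matrix_vector_mult_def axis_def if_distrib cong: if_cong)

lemma psd_entry: "psd_mat U \<Longrightarrow> U $ i $ j = U $ j $ i"
  unfolding psd_mat_def by (metis transpose_def vec_lambda_beta)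

lemma diag_quad: "axis k 1 \<bullet> ((U::real^'n^'n) *v axis k 1) = U $ k $ k"
  by (subst inner_commute) (simp add: inner_axis mv_axis)

lemma trace_XU: "trace ((X::real^'n^'n) ** U) = (\<Sum>i\<in>UNIV. \<Sum>j\<in>UNIV. X$i$j * U$j$i)"
  by (simp add: trace_def matrix_matrix_mult_def)

lemma quad_sum: "x \<bullet> ((X::real^'n^'n) *v x) = (\<Sum>i\<in>UNIV. \<Sum>j\<in>UNIV. x$i * X$i$j * x$j)"
  by (simp add: inner_vec_def matrix_vector_mult_def sum_distrib_left mult.assoc)

lemma schur_step:
  fixes U :: "real^'n^'n"
  assumes "c \<noteq> 0" and w: "\<And>i. w $ i = U $ i $ k" and c: "c = U $ k $ k"
  and U': "U' = (\<chi> i j. U$i$j - w$i * w$j / c)"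
  shows "trace (X ** U) = trace (X ** U') + (w \<bullet> (X *v w)) / c"
    and "x \<bullet> (U' *v x) = x \<bullet> (U *v x) - (w \<bullet> x)^2 / c"
proof -
  show "trace (X ** U) = trace (X ** U') + (w \<bullet> (X *v w)) / c"
    unfolding trace_XU quad_sum U'
    by (simp add: sum_subtractf sum_divide_distrib[symmetric] algebra_simps)
  have "(w \<bullet> x)^2 = (\<Sum>i\<in>UNIV. \<Sum>j\<in>UNIV. x$i * (w$i * w$j) * x$j)"
    by (simp add: inner_vec_def power2_eq_square sum_product algebra_simps)
  then show "x \<bullet> (U' *v x) = x \<bullet> (U *v x) - (w \<bullet> x)^2 / c"
    unfolding quad_sum U'
    by (simp add: sum_divide_distrib sum_subtractf[symmetric] algebra_simps)
qed

lemma trace_psd_aux: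
  fixes X :: "real^'n^'n"
  assumes X: "psd_mat X" and S: "finite S"
  shows "\<forall>U::real^'n^'n. psd_mat U \<and> (\<forall>i j. i \<notin> S \<longrightarrow> U$i$j = 0) \<longrightarrow> 0 \<le> trace (X ** U)"
  using S
proof (induction S rule: finite_induct)
  case empty
  show ?case
  proof (intro allI impI)
    fix U :: "real^'n^'n" assume "psd_mat U \<and> (\<forall>i j. i \<notin> {} \<longrightarrow> U$i$j = 0)"
    then show "0 \<le> trace (X ** U)" by (simp add: trace_XU)
  qed
next
  case (insert k S)
  show ?case
  proof (intro allI impI)
    fix U :: "real^'n^'n" assume H: "psd_mat U \<and> (\<forall>i j. i \<notin> insert k S \<longrightarrow> U$i$j = 0)"
    then have U: "psd_mat U" and Z: "\<And>i j. i \<notin> insert k S \<Longrightarrow> U$i$j = 0" by auto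
    define c where "c = U $ k $ k"
    have c0: "0 \<le> c" using U diag_quad[of k U] unfolding c_def psd_mat_def by metis
    show "0 \<le> trace (X ** U)"
    proof (cases "c = 0")
      case True
      then have "axis k 1 \<bullet> (U *v axis k 1) = 0" by (simp add: diag_quad c_def)
      then have "U *v axis k 1 = 0" using psd_kernel[OF U] by blast
      then have col: "U $ i $ k = 0" for i using mv_axis[of U k i] by simp
      have "\<forall>i j. i \<notin> S \<longrightarrow> U$i$j = 0"
      proof (intro allI impI)
        fix i j assume "i \<notin> S"
        show "U$i$j = 0"
        proof (cases "i = k")
          case True then show ?thesis using col psd_entry[OF U, of k j] by simp
        next
          case False then show ?thesis using Z \<open>i \<notin> S\<close> by simp
        qed
      qed
      then show ?thesis using insert.IH U by blast
    next
      case False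
      then have cp: "0 < c" using c0 by simp
      define w :: "real^'n" where "w = (\<chi> i. U $ i $ k)"
      define U' :: "real^'n^'n" where "U' = (\<chi> i j. U$i$j - w$i * w$j / c)"
      have wi: "\<And>i. w $ i = U $ i $ k" by (simp add: w_def)
      note st = schur_step[OF False wi c_def U'_def]
      have wU: "w = U *v axis k 1" by (simp add: vec_eq_iff wi mv_axis)
      have "psd_mat U'"
        unfolding psd_mat_def
      proof (intro conjI allI)
        show "transpose U' = U'"
          by (simp add: vec_eq_iff transpose_def U'_def psd_entry[OF U] mult.commute)
        fix x :: "real^'n"
        have "(x \<bullet> (U *v axis k 1))^2 \<le> (axis k 1 \<bullet> (U *v axis k 1)) * (x \<bullet> (U *v x))"
          by (rule psd_cs[OF U])
        then have "(w \<bullet> x)^2 \<le> c * (x \<bullet> (U *v x))"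
          by (simp add: wU diag_quad c_def inner_commute)
        then have "(w \<bullet> x)^2 / c \<le> x \<bullet> (U *v x)" using cp by (simp add: field_simps)
        then show "0 \<le> x \<bullet> (U' *v x)" using st(2)[of x] by simp
      qed
      moreover have "\<forall>i j. i \<notin> S \<longrightarrow> U'$i$j = 0"
      proof (intro allI impI)
        fix i j assume "i \<notin> S"
        show "U'$i$j = 0"
        proof (cases "i = k")
          case True then show ?thesis
            using cp by (simp add: U'_def wi c_def psd_entry[OF U, of k j])
        next
          case False then show ?thesis using Z[of i] \<open>i \<notin> S\<close> by (simp add: U'_def wi)
        qed
      qed
      ultimately have "0 \<le> trace (X ** U')" using insert.IH by blast
      moreover have "0 \<le> w \<bullet> (X *v w)" using X by (simp add: psd_mat_def)
      ultimately show ?thesis using st(1) cp by simp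
    qed
  qed
qed

lemma trace_psd_nonneg:
  fixes X U :: "real^'n^'n"
  assumes "psd_mat X" "psd_mat U" shows "0 \<le> trace (X ** U)"
  using trace_psd_aux[OF assms(1) finite[of UNIV]] assms(2) by blast

lemma trace_bound:
  fixes T U :: "real^'n^'n"
  assumes "transpose U = U"
  shows "trace (T ** U) \<le> norm T * sqrt (trace (U ** U))"
proof -
  have s: "U$j$i = U$i$j" for i j using assms by (metis transpose_def vec_lambda_beta)
  have "trace (T ** U) = T \<bullet> U" unfolding trace_XU by (simp add: inner_vec_def s)
  moreover have "trace (U ** U) = U \<bullet> U" unfolding trace_XU by (simp add: inner_vec_def s)
  moreover have "sqrt (U \<bullet> U) = norm U" by (simp add: norm_eq_sqrt_inner)
  ultimately show ?thesis using norm_cauchy_schwarz[of T U] by simp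
qed

lemma det_meas[measurable]: "(\<lambda>X::real^'n^'n. det X) \<in> borel_measurable borel"
  unfolding det_def by measurable

lemma psd_closed: "closed {X::real^'n^'n. psd_mat X}"
proof -
  have "{X::real^'n^'n. psd_mat X} = {X. (\<forall>i j. X$i$j = X$j$i) \<and> (\<forall>x. 0 \<le> (\<Sum>i\<in>UNIV. \<Sum>j\<in>UNIV. x$i * X$i$j * x$j))}"
    unfolding psd_mat_def quad_sum by (auto simp: vec_eq_iff transpose_def)
  also have "closed \<dots>"
    by (intro closed_Collect_conj closed_Collect_all closed_Collect_eq closed_Collect_le
        continuous_intros)
  finally show ?thesis .
qed

lemma pd_sets: "{X::real^'n^'n. pd_mat X} \<in> sets borel"
proof -
  have "{X::real^'n^'n. pd_mat X} = {X. psd_mat X} \<inter> {X \<in> space borel. det X \<noteq> 0}"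
    by (auto simp: pd_iff)
  also have "\<dots> \<in> sets borel"
    by (rule sets.Int[OF borel_closed[OF psd_closed]]) measurable
  finally show ?thesis .
qed

lemma not_pd_sets: "{X::real^'n^'n. \<not> pd_mat X} \<in> sets borel"
proof -
  have "{X::real^'n^'n. \<not> pd_mat X} = space borel - {X. pd_mat X}" by auto
  then show ?thesis using borel_comp[OF pd_sets] by (simp add: Compl_eq_Diff_UNIV)
qed

definition bphi :: "real^'n^'n \<Rightarrow> real^'n^'n \<Rightarrow> real" where
  "bphi T U = 1 - etr (- (T ** U))"

lemma trace_neg: "trace (- (A::real^'n^'n)) = - trace A"
  by (simp add: trace_def sum_negf)

lemma etr_alt:
  fixes T U :: "real^'n^'n"
  shows "etr (- (T ** U)) = exp (- (\<Sum>i\<in>UNIV. \<Sum>j\<in>UNIV. T$i$j * U$j$i))"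
  by (simp add: etr_def trace_neg trace_XU)

lemma etr_swap: "etr (- ((T::real^'n^'n) ** U)) = etr (- (U ** T))"
  unfolding etr_def trace_neg using trace_mul_sym[of T U] by simp

lemma etr_meas[measurable]:
  fixes f g :: "'a \<Rightarrow> real^'n^'n"
  assumes [measurable]: "f \<in> borel_measurable N" "g \<in> borel_measurable N"
  shows "(\<lambda>x. etr (- (f x ** g x))) \<in> borel_measurable N"
  unfolding etr_alt by measurable

lemma bphi_meas[measurable]:
  fixes f g :: "'a \<Rightarrow> real^'n^'n"
  assumes [measurable]: "f \<in> borel_measurable N" "g \<in> borel_measurable N"
  shows "(\<lambda>x. bphi (f x) (g x)) \<in> borel_measurable N"
  unfolding bphi_def by measurable

lemma trUU_meas[measurable]:
  fixes f :: "'a \<Rightarrow> real^'n^'n"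
  assumes [measurable]: "f \<in> borel_measurable N"
  shows "(\<lambda>x. trace (f x ** f x)) \<in> borel_measurable N"
  unfolding trace_XU by measurable

lemma pd_psd: "pd_mat X \<Longrightarrow> psd_mat X"
  by (simp add: pd_iff)

lemma bphi_bounds:
  assumes "psd_mat T" "psd_mat U"
  shows "0 \<le> bphi T U" "bphi T U \<le> 1" "bphi T U \<le> trace (T ** U)"
proof -
  have s: "0 \<le> trace (T ** U)" by (rule trace_psd_nonneg[OF assms])
  have e: "etr (- (T ** U)) = exp (- trace (T ** U))" by (simp add: etr_def trace_neg)
  show "0 \<le> bphi T U" unfolding bphi_def e using s by simp
  show "bphi T U \<le> 1" unfolding bphi_def e by simp
  show "bphi T U \<le> trace (T ** U)" unfolding bphi_def e
    using exp_ge_add_one_self[of "- trace (T ** U)"] by simp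
qed

lemma pd_nonzero_norm:
  fixes U :: "real^'n^'n"
  assumes "pd_mat U" shows "0 < trace (U ** U)" "trace (U ** U) = (norm U)^2"
proof -
  have sym: "transpose U = U" using assms by (simp add: pd_mat_def)
  have s: "U$j$i = U$i$j" for i j using sym by (metis transpose_def vec_lambda_beta)
  show tr: "trace (U ** U) = (norm U)^2" unfolding trace_XU
    by (simp add: power2_norm_eq_inner inner_vec_def s)
  have "U \<noteq> 0"
  proof
    assume "U = 0"
    moreover have "axis undefined (1::real) \<noteq> 0" by (simp add: axis_eq_0_iff)
    ultimately show False using assms unfolding pd_mat_def
      by (metis inner_zero_right matrix_vector_mult_0 less_irrefl)
  qed
  then show "0 < trace (U ** U)" unfolding tr by simp
qed

context
  fixes g :: "real^'n^'n \<Rightarrow> real" and A :: "real^'n^'n" and \<mu> :: "(real^'n^'n) measure"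
  assumes B: "mv_bernstein g A 0 \<mu>"
begin

lemma bern_sets: "sets \<mu> = sets borel" using B by (simp add: mv_bernstein_def)

lemma bern_meas_eq: "measurable N \<mu> = measurable N borel" "measurable \<mu> N = measurable borel N"
  by (rule measurable_cong_sets[OF refl bern_sets], rule measurable_cong_sets[OF bern_sets refl])

lemma bern_space: "space \<mu> = UNIV" using bern_sets sets_eq_imp_space_eq by fastforce

lemma bern_AE_pd: "AE U in \<mu>. pd_mat U"
proof (rule AE_I')
  show "{X. \<not> pd_mat X} \<in> null_sets \<mu>" using B not_pd_sets bern_sets
    by (simp add: mv_bernstein_def null_sets_def)
qed auto

definition mfun :: "real^'n^'n \<Rightarrow> real" where "mfun U = min 1 (sqrt (trace (U ** U)))"

lemma mfun_meas[measurable]: "mfun \<in> borel_measurable borel"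
  unfolding mfun_def by measurable

lemma mfun_fin: "(\<integral>\<^sup>+U. ennreal (mfun U) \<partial>\<mu>) < \<infinity>"
  using B by (simp add: mv_bernstein_def mfun_def)

lemma bern_sigma_finite: "sigma_finite_measure \<mu>"
proof
  define Bn where "Bn n = {U. 1 / real (Suc n) \<le> mfun U}" for n
  let ?A = "insert {X. \<not> pd_mat X} (range Bn)"
  have Bs: "Bn n \<in> sets \<mu>" for n
    unfolding bern_sets Bn_def by measurable
  have fin: "emeasure \<mu> (Bn n) \<noteq> \<infinity>" for n
  proof -
    have "emeasure \<mu> (Bn n) = (\<integral>\<^sup>+U. indicator (Bn n) U \<partial>\<mu>)"
      using Bs by simp
    also have "\<dots> \<le> (\<integral>\<^sup>+U. ennreal (real (Suc n)) * ennreal (mfun U) \<partial>\<mu>)"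
    proof (rule nn_integral_mono)
      fix U show "indicator (Bn n) U \<le> ennreal (real (Suc n)) * ennreal (mfun U)"
      proof (cases "U \<in> Bn n")
        case True
        then have "1 \<le> real (Suc n) * mfun U" unfolding Bn_def by (simp add: field_simps)
        then show ?thesis using True by (simp add: ennreal_mult'[symmetric] ennreal_leI del: of_nat_Suc)
      qed simp
    qed
    also have "\<dots> = ennreal (real (Suc n)) * (\<integral>\<^sup>+U. ennreal (mfun U) \<partial>\<mu>)"
      by (rule nn_integral_cmult) (simp add: bern_meas_eq)
    also have "\<dots> < \<infinity>" using mfun_fin by (simp add: ennreal_mult_less_top)
    finally show ?thesis by simp
  qed
  show "\<exists>A. countable A \<and> A \<subseteq> sets \<mu> \<and> \<Union> A = space \<mu> \<and> (\<forall>a\<in>A. emeasure \<mu> a \<noteq> \<infinity>)"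
  proof (intro exI conjI)
    show "countable ?A" by simp
    show "?A \<subseteq> sets \<mu>" using Bs not_pd_sets bern_sets by auto
    show "\<Union> ?A = space \<mu>"
    proof -
      have "U \<in> \<Union> ?A" for U
      proof (cases "pd_mat U")
        case True
        then have "0 < mfun U" using pd_nonzero_norm(1)[OF True] by (simp add: mfun_def)
        then obtain n where "inverse (real (Suc n)) < mfun U"
          using reals_Archimedean by blast
        then have "U \<in> Bn n" by (simp add: Bn_def field_simps)
        then show ?thesis by blast
      qed simp
      then show ?thesis by (auto simp: bern_space)
    qed
    show "\<forall>a\<in>?A. emeasure \<mu> a \<noteq> \<infinity>"
      using fin B by (auto simp: mv_bernstein_def)
  qed
qed

lemma bern_integrable:
  assumes T: "pd_mat T"
  shows "integrable \<mu> (bphi T)"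
proof (rule integrableI_bounded)
  show "bphi T \<in> borel_measurable \<mu>" unfolding bern_meas_eq by measurable
  define K where "K = max 1 (norm T)"
  have "(\<integral>\<^sup>+U. ennreal (norm (bphi T U)) \<partial>\<mu>) \<le> (\<integral>\<^sup>+U. ennreal K * ennreal (mfun U) \<partial>\<mu>)"
  proof (rule nn_integral_mono_AE)
    show "AE U in \<mu>. ennreal (norm (bphi T U)) \<le> ennreal K * ennreal (mfun U)"
      using bern_AE_pd
    proof eventually_elim
      case (elim U)
      have b: "0 \<le> bphi T U" "bphi T U \<le> 1" "bphi T U \<le> trace (T ** U)"
        using bphi_bounds[OF pd_psd[OF T] pd_psd[OF elim]] by auto
      have sym: "transpose U = U" using elim by (simp add: pd_mat_def)
      define r where "r = sqrt (trace (U ** U))"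
      have r0: "0 \<le> r" unfolding r_def using pd_nonzero_norm(1)[OF elim] by simp
      have tb: "trace (T ** U) \<le> norm T * r" unfolding r_def by (rule trace_bound[OF sym])
      have K1: "1 \<le> K" "norm T \<le> K" by (auto simp: K_def)
      have "bphi T U \<le> K * min 1 r"
      proof (cases "r \<le> 1")
        case True
        have "norm T * r \<le> K * r" using K1 r0 by (simp add: mult_right_mono)
        then show ?thesis using True b tb by simp
      next
        case False
        then show ?thesis using b K1 by simp
      qed
      then have "norm (bphi T U) \<le> K * mfun U" using b by (simp add: mfun_def r_def)
      moreover have "0 \<le> K" using K1 by simp
      ultimately show ?case by (simp add: ennreal_mult'[symmetric] ennreal_leI)
    qed
  qed
  also have "\<dots> = ennreal K * (\<integral>\<^sup>+U. ennreal (mfun U) \<partial>\<mu>)"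
    by (rule nn_integral_cmult) (simp add: bern_meas_eq)
  also have "\<dots> < \<infinity>" using mfun_fin by (simp add: ennreal_mult_less_top)
  finally show "(\<integral>\<^sup>+U. ennreal (norm (bphi T U)) \<partial>\<mu>) < \<infinity>" .
qed

lemma bern_value:
  assumes T: "pd_mat T"
  shows "ennreal (g T) = ennreal (trace A) + (\<integral>\<^sup>+U. ennreal (bphi T U) \<partial>\<mu>)"
    and "0 \<le> g T"
    and "(\<integral>\<^sup>+U. ennreal (bphi T U) \<partial>\<mu>) < \<infinity>"
proof -
  have gT: "g T = trace A + (\<integral>U. bphi T U \<partial>\<mu>)"
    using B T by (simp add: mv_bernstein_def bphi_def trace_def matrix_matrix_mult_def)
  have nn: "AE U in \<mu>. 0 \<le> bphi T U"
    using bern_AE_pd by eventually_elim (rule bphi_bounds(1)[OF pd_psd[OF T] pd_psd])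
  have eq: "(\<integral>\<^sup>+U. ennreal (bphi T U) \<partial>\<mu>) = ennreal (\<integral>U. bphi T U \<partial>\<mu>)"
    by (rule nn_integral_eq_integral[OF bern_integrable[OF T] nn])
  have i0: "0 \<le> (\<integral>U. bphi T U \<partial>\<mu>)" using nn by (rule integral_nonneg_AE)
  have a0: "0 \<le> trace A" using B unfolding mv_bernstein_def psd_mat_def trace_def
    by (auto intro!: sum_nonneg simp: diag_quad[symmetric])
  show "ennreal (g T) = ennreal (trace A) + (\<integral>\<^sup>+U. ennreal (bphi T U) \<partial>\<mu>)"
    unfolding eq gT using i0 a0 by (simp add: ennreal_plus)
  show "0 \<le> g T" using gT i0 a0 by simp
  show "(\<integral>\<^sup>+U. ennreal (bphi T U) \<partial>\<mu>) < \<infinity>" unfolding eq by simp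
qed

end

lemma indep_prod_integral:
  fixes Y1 :: "'b \<Rightarrow> 'c::topological_space" and Y2 :: "'b \<Rightarrow> 'd::topological_space"
    and \<phi> :: "'c \<Rightarrow> real" and \<psi> :: "'d \<Rightarrow> real"
  assumes P: "prob_space N" and I: "indep_rv N borel Y1 borel Y2"
    and [measurable]: "Y1 \<in> borel_measurable N" "Y2 \<in> borel_measurable N"
       "\<phi> \<in> borel_measurable borel" "\<psi> \<in> borel_measurable borel"
    and i1: "integrable N (\<lambda>y. \<phi> (Y1 y))" and i2: "integrable N (\<lambda>y. \<psi> (Y2 y))"
  shows "(\<integral>y. \<phi> (Y1 y) * \<psi> (Y2 y) \<partial>N) = (\<integral>y. \<phi> (Y1 y) \<partial>N) * (\<integral>y. \<psi> (Y2 y) \<partial>N)"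
proof -
  interpret prob_space N by (rule P)
  define Z1 where "Z1 = (\<lambda>y. \<phi> (Y1 y))"
  define Z2 where "Z2 = (\<lambda>y. \<psi> (Y2 y))"
  have [measurable]: "Z1 \<in> borel_measurable N" "Z2 \<in> borel_measurable N"
    unfolding Z1_def Z2_def by measurable
  have ind: "indep_set {Z1 -` A \<inter> space N | A. A \<in> sets borel} {Z2 -` A \<inter> space N | A. A \<in> sets borel}"
  proof (rule indep_setI)
    show "{Z1 -` A \<inter> space N | A. A \<in> sets borel} \<subseteq> events"
      "{Z2 -` A \<inter> space N | A. A \<in> sets borel} \<subseteq> events" by auto
    fix a b assume "a \<in> {Z1 -` A \<inter> space N | A. A \<in> sets borel}" "b \<in> {Z2 -` A \<inter> space N | A. A \<in> sets borel}"
    then obtain A B where A: "A \<in> sets borel" "a = Z1 -` A \<inter> space N"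
      and B: "B \<in> sets borel" "b = Z2 -` B \<inter> space N" by auto
    have A': "\<phi> -` A \<in> sets borel" using measurable_sets[of \<phi> borel borel A] A by simp
    have B': "\<psi> -` B \<in> sets borel" using measurable_sets[of \<psi> borel borel B] B by simp
    have "prob (a \<inter> b) = measure N (Y1 -` (\<phi> -` A) \<inter> Y2 -` (\<psi> -` B) \<inter> space N)"
      unfolding A B Z1_def Z2_def by (intro arg_cong[where f="measure N"]) auto
    also have "\<dots> = measure N (Y1 -` (\<phi> -` A) \<inter> space N) * measure N (Y2 -` (\<psi> -` B) \<inter> space N)"
      using I A' B' unfolding indep_rv_def by blast
    also have "\<dots> = prob a * prob b"
      unfolding A B Z1_def Z2_def by (intro arg_cong2[where f="(*)"] arg_cong[where f="measure N"]) auto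
    finally show "prob (a \<inter> b) = prob a * prob b" .
  qed
  have "indep_var borel Z1 borel Z2"
    unfolding indep_var_def indep_vars_def2
  proof (intro conjI ballI)
    fix i :: bool show "random_variable (case_bool borel borel i) (case_bool Z1 Z2 i)"
      by (cases i) auto
  next
    have "(\<lambda>i. {case_bool Z1 Z2 i -` A \<inter> space N |A. A \<in> sets (case_bool borel borel i)})
      = case_bool {Z1 -` A \<inter> space N | A. A \<in> sets borel} {Z2 -` A \<inter> space N | A. A \<in> sets borel}"
      by (rule ext, simp split: bool.split)
    then show "indep_sets (\<lambda>i. {case_bool Z1 Z2 i -` A \<inter> space N |A. A \<in> sets (case_bool borel borel i)}) UNIV"
      using ind unfolding indep_set_def by simp
  qed
  from indep_var_lebesgue_integral[OF this] i1 i2 show ?thesis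
    unfolding Z1_def Z2_def by simp
qed

lemma bounded_integrable:
  fixes h :: "'a \<Rightarrow> real"
  assumes "prob_space M" "h \<in> borel_measurable M" "\<forall>x\<in>space M. \<bar>h x\<bar> \<le> 1"
  shows "integrable M h"
proof -
  interpret prob_space M by fact
  show ?thesis using assms(2,3) by (intro integrable_const_bound[where B=1]) auto
qed

lemma pointwise_ineq:
  fixes M :: "'a measure" and N :: "'b measure"
    and X11 :: "'a \<Rightarrow> real^'p^'p" and X22 :: "'a \<Rightarrow> real^'q^'q"
    and Y11 :: "'b \<Rightarrow> real^'p^'p" and Y22 :: "'b \<Rightarrow> real^'q^'q"
    and U :: "real^'p^'p" and V :: "real^'q^'q"
  assumes PM: "prob_space M" and PN: "prob_space N"
    and [measurable]: "X11 \<in> borel_measurable M" "X22 \<in> borel_measurable M"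
    and [measurable]: "Y11 \<in> borel_measurable N" "Y22 \<in> borel_measurable N"
    and pdX: "\<forall>x\<in>space M. pd_mat (X11 x) \<and> pd_mat (X22 x)"
    and pdY: "\<forall>y\<in>space N. pd_mat (Y11 y) \<and> pd_mat (Y22 y)"
    and d1: "distr M borel X11 = distr N borel Y11"
    and d2: "distr M borel X22 = distr N borel Y22"
    and ind: "indep_rv N borel Y11 borel Y22"
    and lt: "lt_order M X11 X22 N Y11 Y22"
    and U: "pd_mat U" and V: "pd_mat V"
  shows "(\<integral>\<^sup>+y. ennreal (bphi (Y11 y) U) \<partial>N) * (\<integral>\<^sup>+y. ennreal (bphi (Y22 y) V) \<partial>N)
         \<le> (\<integral>\<^sup>+x. ennreal (bphi (X11 x) U) * ennreal (bphi (X22 x) V) \<partial>M)"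
proof -
  define a where "a x = etr (- (U ** X11 x))" for x
  define b where "b x = etr (- (V ** X22 x))" for x
  define a' where "a' y = etr (- (U ** Y11 y))" for y
  define b' where "b' y = etr (- (V ** Y22 y))" for y
  have [measurable]: "a \<in> borel_measurable M" "b \<in> borel_measurable M"
    "a' \<in> borel_measurable N" "b' \<in> borel_measurable N"
    unfolding a_def b_def a'_def b'_def by measurable
  have psdU: "psd_mat U" and psdV: "psd_mat V" using U V by (auto intro: pd_psd)
  have bx: "bphi (X11 x) U = 1 - a x" "bphi (X22 x) V = 1 - b x" for x
    unfolding bphi_def a_def b_def by (simp_all add: etr_swap)
  have by': "bphi (Y11 y) U = 1 - a' y" "bphi (Y22 y) V = 1 - b' y" for y
    unfolding bphi_def a'_def b'_def by (simp_all add: etr_swap)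
  have bdX: "0 \<le> a x" "a x \<le> 1" "0 \<le> b x" "b x \<le> 1" if "x \<in> space M" for x
    using bphi_bounds[OF pd_psd psdU, of "X11 x"] bphi_bounds[OF pd_psd psdV, of "X22 x"] pdX that bx
    by auto
  have bdY: "0 \<le> a' y" "a' y \<le> 1" "0 \<le> b' y" "b' y \<le> 1" if "y \<in> space N" for y
    using bphi_bounds[OF pd_psd psdU, of "Y11 y"] bphi_bounds[OF pd_psd psdV, of "Y22 y"] pdY that by'
    by auto
  have iM: "integrable M a" "integrable M b" "integrable M (\<lambda>x. a x * b x)"
    using bdX by (auto intro!: bounded_integrable[OF PM] simp: abs_le_iff mult_le_one)
  have iN: "integrable N a'" "integrable N b'" "integrable N (\<lambda>x. a' x * b' x)"
    using bdY by (auto intro!: bounded_integrable[OF PN] simp: abs_le_iff mult_le_one)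
  interpret M: prob_space M by (rule PM)
  interpret N: prob_space N by (rule PN)
  have ea: "(\<integral>x. a x \<partial>M) = (\<integral>y. a' y \<partial>N)"
  proof -
    have "(\<integral>x. a x \<partial>M) = (\<integral>T. etr (- (U ** T)) \<partial>distr M borel X11)"
      unfolding a_def by (rule integral_distr[symmetric]) measurable
    also have "\<dots> = (\<integral>y. a' y \<partial>N)" unfolding d1 a'_def by (rule integral_distr) measurable
    finally show ?thesis .
  qed
  have eb: "(\<integral>x. b x \<partial>M) = (\<integral>y. b' y \<partial>N)"
  proof -
    have "(\<integral>x. b x \<partial>M) = (\<integral>T. etr (- (V ** T)) \<partial>distr M borel X22)"
      unfolding b_def by (rule integral_distr[symmetric]) measurable
    also have "\<dots> = (\<integral>y. b' y \<partial>N)" unfolding d2 b'_def by (rule integral_distr) measurable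
    finally show ?thesis .
  qed
  have eab: "(\<integral>y. a' y * b' y \<partial>N) = (\<integral>y. a' y \<partial>N) * (\<integral>y. b' y \<partial>N)"
    unfolding a'_def b'_def
    by (rule indep_prod_integral[OF PN ind, where \<phi>="\<lambda>T. etr (- (U ** T))" and \<psi>="\<lambda>T. etr (- (V ** T))"])
       (use iN(1,2) in \<open>simp_all add: a'_def[abs_def] b'_def[abs_def]\<close>)
  have lab: "(\<integral>y. a' y * b' y \<partial>N) \<le> (\<integral>x. a x * b x \<partial>M)"
    using lt psdU psdV unfolding lt_order_def a_def b_def a'_def b'_def by blast
  define A where "A = (\<integral>y. a' y \<partial>N)"
  define B where "B = (\<integral>y. b' y \<partial>N)"
  have IM: "(\<integral>x. bphi (X11 x) U * bphi (X22 x) V \<partial>M) = 1 - A - B + (\<integral>x. a x * b x \<partial>M)"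
  proof -
    have "(\<integral>x. bphi (X11 x) U * bphi (X22 x) V \<partial>M) = (\<integral>x. (1 - a x - b x) + a x * b x \<partial>M)"
      unfolding bx by (simp add: algebra_simps)
    also have "\<dots> = 1 - (\<integral>x. a x \<partial>M) - (\<integral>x. b x \<partial>M) + (\<integral>x. a x * b x \<partial>M)"
      using iM by (simp add: integral_add integral_diff M.prob_space)
    finally show ?thesis unfolding ea eb A_def B_def .
  qed
  have IN1: "(\<integral>y. bphi (Y11 y) U \<partial>N) = 1 - A"
    unfolding by' A_def using iN by (simp add: integral_diff N.prob_space)
  have IN2: "(\<integral>y. bphi (Y22 y) V \<partial>N) = 1 - B"
    unfolding by' B_def using iN by (simp add: integral_diff N.prob_space)
  have A1: "A \<le> 1" "B \<le> 1" unfolding A_def B_def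
    using bdY by (auto intro!: N.integral_le_const simp: iN)
  have real_ineq: "(1 - A) * (1 - B) \<le> (\<integral>x. bphi (X11 x) U * bphi (X22 x) V \<partial>M)"
    unfolding IM using lab eab by (simp add: A_def B_def algebra_simps)
  have nnM: "(\<integral>\<^sup>+x. ennreal (bphi (X11 x) U) * ennreal (bphi (X22 x) V) \<partial>M)
      = ennreal (\<integral>x. bphi (X11 x) U * bphi (X22 x) V \<partial>M)"
  proof -
    have "(\<integral>\<^sup>+x. ennreal (bphi (X11 x) U) * ennreal (bphi (X22 x) V) \<partial>M)
        = (\<integral>\<^sup>+x. ennreal (bphi (X11 x) U * bphi (X22 x) V) \<partial>M)"
      using bdX by (intro nn_integral_cong) (simp add: bx ennreal_mult')
    also have "\<dots> = ennreal (\<integral>x. bphi (X11 x) U * bphi (X22 x) V \<partial>M)"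
    proof (rule nn_integral_eq_integral)
      show "integrable M (\<lambda>x. bphi (X11 x) U * bphi (X22 x) V)" using iM by (simp add: bx algebra_simps)
      show "AE x in M. 0 \<le> bphi (X11 x) U * bphi (X22 x) V"
      proof (rule AE_I2)
        fix x assume "x \<in> space M"
        then show "0 \<le> bphi (X11 x) U * bphi (X22 x) V"
          using bdX[of x] unfolding bx by (intro mult_nonneg_nonneg) auto
      qed
    qed
    finally show ?thesis .
  qed
  have nnN1: "(\<integral>\<^sup>+y. ennreal (bphi (Y11 y) U) \<partial>N) = ennreal (1 - A)"
    unfolding IN1[symmetric] using iN bdY
    by (intro nn_integral_eq_integral AE_I2) (auto simp: by')
  have nnN2: "(\<integral>\<^sup>+y. ennreal (bphi (Y22 y) V) \<partial>N) = ennreal (1 - B)"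
    unfolding IN2[symmetric] using iN bdY
    by (intro nn_integral_eq_integral AE_I2) (auto simp: by')
  show ?thesis unfolding nnM nnN1 nnN2
    using real_ineq A1 by (simp add: ennreal_mult'[symmetric] ennreal_leI)
qed

lemma meas_pair_cong: "sets \<mu> = sets borel \<Longrightarrow> measurable (A \<Otimes>\<^sub>M \<mu>) B = measurable (A \<Otimes>\<^sub>M borel) B"
  by (rule measurable_cong_sets[OF sets_pair_measure_cong[OF refl] refl])

lemma meas_pair_cong2: "sets \<mu> = sets borel \<Longrightarrow> sets \<nu> = sets borel \<Longrightarrow>
   measurable ((A \<Otimes>\<^sub>M \<mu>) \<Otimes>\<^sub>M \<nu>) B = measurable ((A \<Otimes>\<^sub>M borel) \<Otimes>\<^sub>M borel) B"
  by (rule measurable_cong_sets[OF sets_pair_measure_cong[OF sets_pair_measure_cong[OF refl]] refl])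

theorem theorem3p12:
  fixes M :: "'a measure" and N :: "'b measure"
    and X11 :: "'a \<Rightarrow> real^'p^'p" and X22 :: "'a \<Rightarrow> real^'q^'q"
    and Y11 :: "'b \<Rightarrow> real^'p^'p" and Y22 :: "'b \<Rightarrow> real^'q^'q"
    and f :: "real^'p^'p \<Rightarrow> real" and g :: "real^'q^'q \<Rightarrow> real"
    and A1 :: "real^'p^'p" and A2 :: "real^'q^'q"
    and \<mu>1 :: "(real^'p^'p) measure" and \<mu>2 :: "(real^'q^'q) measure"
  assumes "prob_space M" and "prob_space N"
    and "X11 \<in> borel_measurable M" and "X22 \<in> borel_measurable M"
    and "Y11 \<in> borel_measurable N" and "Y22 \<in> borel_measurable N"
    and "\<forall>x\<in>space M. pd_mat (X11 x) \<and> pd_mat (X22 x)"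
    and "\<forall>y\<in>space N. pd_mat (Y11 y) \<and> pd_mat (Y22 y)"
    and "distr M borel X11 = distr N borel Y11"
    and "distr M borel X22 = distr N borel Y22"
    and "indep_rv N borel Y11 borel Y22"
    and "lt_order M X11 X22 N Y11 Y22"
    and "mv_bernstein f A1 0 \<mu>1" and "mv_bernstein g A2 0 \<mu>2"
    and "integrable M (\<lambda>x. f (X11 x) * g (X22 x))"
    and "integrable N (\<lambda>y. f (Y11 y))" and "integrable N (\<lambda>y. g (Y22 y))"
  shows "(\<integral>x. f (X11 x) * g (X22 x) \<partial>M) \<ge> (\<integral>y. f (Y11 y) \<partial>N) * (\<integral>y. g (Y22 y) \<partial>N)"
proof -
  note PM = assms(1) and PN = assms(2)
  note [measurable] = assms(3-6)
  note pdX = assms(7) and pdY = assms(8)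
  note B1 = assms(13) and B2 = assms(14)
  interpret M: prob_space M by (rule PM)
  interpret N: prob_space N by (rule PN)
  interpret s1: sigma_finite_measure \<mu>1 by (rule bern_sigma_finite[OF B1])
  interpret s2: sigma_finite_measure \<mu>2 by (rule bern_sigma_finite[OF B2])
  interpret M1: pair_sigma_finite M \<mu>1 by (simp add: pair_sigma_finite_def s1.sigma_finite_measure_axioms M.sigma_finite_measure_axioms)
  interpret M2: pair_sigma_finite M \<mu>2 by (simp add: pair_sigma_finite_def s2.sigma_finite_measure_axioms M.sigma_finite_measure_axioms)
  interpret N1: pair_sigma_finite N \<mu>1 by (simp add: pair_sigma_finite_def s1.sigma_finite_measure_axioms N.sigma_finite_measure_axioms)
  interpret N2: pair_sigma_finite N \<mu>2 by (simp add: pair_sigma_finite_def s2.sigma_finite_measure_axioms N.sigma_finite_measure_axioms)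
  have S1: "sets \<mu>1 = sets borel" by (rule bern_sets[OF B1])
  have S2: "sets \<mu>2 = sets borel" by (rule bern_sets[OF B2])
  define F where "F T = (\<integral>\<^sup>+U. ennreal (bphi T U) \<partial>\<mu>1)" for T
  define G where "G T = (\<integral>\<^sup>+V. ennreal (bphi T V) \<partial>\<mu>2)" for T
  define a1 where "a1 = ennreal (trace A1)"
  define a2 where "a2 = ennreal (trace A2)"
  have Fm[measurable]: "F \<in> borel_measurable borel"
    unfolding F_def
    by (rule s1.borel_measurable_nn_integral) (simp add: meas_pair_cong[OF S1])
  have Gm[measurable]: "G \<in> borel_measurable borel"
    unfolding G_def
    by (rule s2.borel_measurable_nn_integral) (simp add: meas_pair_cong[OF S2])
  have pdX1: "pd_mat (X11 x)" "pd_mat (X22 x)" if "x \<in> space M" for x using pdX that by auto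
  have pdY1: "pd_mat (Y11 y)" "pd_mat (Y22 y)" if "y \<in> space N" for y using pdY that by auto
  note bv1 = bern_value[OF B1] and bv2 = bern_value[OF B2]
  have fX: "ennreal (f (X11 x) * g (X22 x)) = (a1 + F (X11 x)) * (a2 + G (X22 x))" if "x \<in> space M" for x
    using bv1[OF pdX1(1)[OF that]] bv2[OF pdX1(2)[OF that]]
    by (simp add: ennreal_mult' a1_def a2_def F_def G_def)
  have fY: "ennreal (f (Y11 y)) = a1 + F (Y11 y)" "ennreal (g (Y22 y)) = a2 + G (Y22 y)" if "y \<in> space N" for y
    using bv1(1)[OF pdY1(1)[OF that]] bv2(1)[OF pdY1(2)[OF that]]
    by (simp_all add: a1_def a2_def F_def G_def)
  have mF: "(\<integral>\<^sup>+x. F (X11 x) \<partial>M) = (\<integral>\<^sup>+y. F (Y11 y) \<partial>N)"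
  proof -
    have "(\<integral>\<^sup>+x. F (X11 x) \<partial>M) = (\<integral>\<^sup>+T. F T \<partial>distr M borel X11)"
      by (rule nn_integral_distr[symmetric]) measurable
    also have "\<dots> = (\<integral>\<^sup>+y. F (Y11 y) \<partial>N)" unfolding assms(9)
      by (rule nn_integral_distr) measurable
    finally show ?thesis .
  qed
  have mG: "(\<integral>\<^sup>+x. G (X22 x) \<partial>M) = (\<integral>\<^sup>+y. G (Y22 y) \<partial>N)"
  proof -
    have "(\<integral>\<^sup>+x. G (X22 x) \<partial>M) = (\<integral>\<^sup>+T. G T \<partial>distr M borel X22)"
      by (rule nn_integral_distr[symmetric]) measurable
    also have "\<dots> = (\<integral>\<^sup>+y. G (Y22 y) \<partial>N)" unfolding assms(10)
      by (rule nn_integral_distr) measurable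
    finally show ?thesis .
  qed
  have key: "(\<integral>\<^sup>+y. F (Y11 y) \<partial>N) * (\<integral>\<^sup>+y. G (Y22 y) \<partial>N) \<le> (\<integral>\<^sup>+x. F (X11 x) * G (X22 x) \<partial>M)"
  proof -
    define h where "h x U V = ennreal (bphi (X11 x) U) * ennreal (bphi (X22 x) V)" for x U V
    define P1 where "P1 U = (\<integral>\<^sup>+y. ennreal (bphi (Y11 y) U) \<partial>N)" for U
    define P2 where "P2 V = (\<integral>\<^sup>+y. ennreal (bphi (Y22 y) V) \<partial>N)" for V
    have hm: "(\<lambda>p. h (fst (fst p)) (snd (fst p)) (snd p)) \<in> borel_measurable ((M \<Otimes>\<^sub>M \<mu>1) \<Otimes>\<^sub>M \<mu>2)"
      unfolding meas_pair_cong2[OF S1 S2] h_def by measurable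
    have "(\<lambda>xU. \<integral>\<^sup>+V. h (fst xU) (snd xU) V \<partial>\<mu>2) \<in> borel_measurable (M \<Otimes>\<^sub>M \<mu>1)"
      by (rule s2.borel_measurable_nn_integral) (use hm in \<open>simp add: case_prod_beta'\<close>)
    then have hm1: "case_prod (\<lambda>x U. \<integral>\<^sup>+V. h x U V \<partial>\<mu>2) \<in> borel_measurable (M \<Otimes>\<^sub>M \<mu>1)"
      by (simp add: case_prod_beta')
    have hm2: "case_prod (\<lambda>x V. h x U V) \<in> borel_measurable (M \<Otimes>\<^sub>M \<mu>2)" for U
      unfolding meas_pair_cong[OF S2] h_def by measurable
    have P1m: "P1 \<in> borel_measurable \<mu>1"
      unfolding P1_def bern_meas_eq[OF B1]
      by (rule N.borel_measurable_nn_integral) measurable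
    have P2m: "P2 \<in> borel_measurable \<mu>2"
      unfolding P2_def bern_meas_eq[OF B2]
      by (rule N.borel_measurable_nn_integral) measurable
    have g1m: "(\<lambda>U. ennreal (bphi T U)) \<in> borel_measurable \<mu>1" for T
      unfolding bern_meas_eq[OF B1] by measurable
    have g2m: "(\<lambda>V. ennreal (bphi T V)) \<in> borel_measurable \<mu>2" for T
      unfolding bern_meas_eq[OF B2] by measurable
    have "(\<integral>\<^sup>+x. F (X11 x) * G (X22 x) \<partial>M) = (\<integral>\<^sup>+x. \<integral>\<^sup>+U. \<integral>\<^sup>+V. h x U V \<partial>\<mu>2 \<partial>\<mu>1 \<partial>M)"
    proof (rule nn_integral_cong)
      fix x
      have "F (X11 x) * G (X22 x) = (\<integral>\<^sup>+U. ennreal (bphi (X11 x) U) * G (X22 x) \<partial>\<mu>1)"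
        unfolding F_def by (rule nn_integral_multc[symmetric]) (rule g1m)
      also have "\<dots> = (\<integral>\<^sup>+U. \<integral>\<^sup>+V. h x U V \<partial>\<mu>2 \<partial>\<mu>1)"
        unfolding G_def h_def
        by (intro nn_integral_cong nn_integral_cmult[symmetric] g2m)
      finally show "F (X11 x) * G (X22 x) = (\<integral>\<^sup>+U. \<integral>\<^sup>+V. h x U V \<partial>\<mu>2 \<partial>\<mu>1)" .
    qed
    also have "\<dots> = (\<integral>\<^sup>+U. \<integral>\<^sup>+x. \<integral>\<^sup>+V. h x U V \<partial>\<mu>2 \<partial>M \<partial>\<mu>1)"
      by (rule M1.Fubini'[OF hm1, symmetric])
    also have "\<dots> = (\<integral>\<^sup>+U. \<integral>\<^sup>+V. \<integral>\<^sup>+x. h x U V \<partial>M \<partial>\<mu>2 \<partial>\<mu>1)"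
      by (intro nn_integral_cong M2.Fubini'[OF hm2, symmetric])
    also have "\<dots> \<ge> (\<integral>\<^sup>+U. \<integral>\<^sup>+V. P1 U * P2 V \<partial>\<mu>2 \<partial>\<mu>1)"
    proof (rule nn_integral_mono_AE)
      show "AE U in \<mu>1. (\<integral>\<^sup>+V. P1 U * P2 V \<partial>\<mu>2) \<le> (\<integral>\<^sup>+V. \<integral>\<^sup>+x. h x U V \<partial>M \<partial>\<mu>2)"
        using bern_AE_pd[OF B1]
      proof eventually_elim
        case (elim U)
        show ?case
        proof (rule nn_integral_mono_AE)
          show "AE V in \<mu>2. P1 U * P2 V \<le> (\<integral>\<^sup>+x. h x U V \<partial>M)"
            using bern_AE_pd[OF B2]
          proof eventually_elim
            case (elim V)
            show ?case unfolding P1_def P2_def h_def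
              by (rule pointwise_ineq[OF assms(1-12) \<open>pd_mat U\<close> elim])
          qed
        qed
      qed
    qed
    also have "(\<integral>\<^sup>+U. \<integral>\<^sup>+V. P1 U * P2 V \<partial>\<mu>2 \<partial>\<mu>1) = (\<integral>\<^sup>+U. P1 U * (\<integral>\<^sup>+V. P2 V \<partial>\<mu>2) \<partial>\<mu>1)"
      by (intro nn_integral_cong nn_integral_cmult P2m)
    also have "\<dots> = (\<integral>\<^sup>+U. P1 U \<partial>\<mu>1) * (\<integral>\<^sup>+V. P2 V \<partial>\<mu>2)"
      by (rule nn_integral_multc[OF P1m])
    also have "(\<integral>\<^sup>+U. P1 U \<partial>\<mu>1) = (\<integral>\<^sup>+y. F (Y11 y) \<partial>N)"
      unfolding P1_def F_def
      by (rule N1.Fubini') (simp add: meas_pair_cong[OF S1])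
    also have "(\<integral>\<^sup>+V. P2 V \<partial>\<mu>2) = (\<integral>\<^sup>+y. G (Y22 y) \<partial>N)"
      unfolding P2_def G_def
      by (rule N2.Fubini') (simp add: meas_pair_cong[OF S2])
    finally show ?thesis .
  qed
  have LHS: "(\<integral>\<^sup>+x. ennreal (f (X11 x) * g (X22 x)) \<partial>M)
      = a1 * a2 + a1 * (\<integral>\<^sup>+x. G (X22 x) \<partial>M) + a2 * (\<integral>\<^sup>+x. F (X11 x) \<partial>M) + (\<integral>\<^sup>+x. F (X11 x) * G (X22 x) \<partial>M)"
  proof -
    have "(\<integral>\<^sup>+x. ennreal (f (X11 x) * g (X22 x)) \<partial>M)
        = (\<integral>\<^sup>+x. a1 * a2 + a1 * G (X22 x) + a2 * F (X11 x) + F (X11 x) * G (X22 x) \<partial>M)"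
      by (intro nn_integral_cong) (simp add: fX algebra_simps)
    also have "\<dots> = (\<integral>\<^sup>+x. a1 * a2 + a1 * G (X22 x) + a2 * F (X11 x) \<partial>M) + (\<integral>\<^sup>+x. F (X11 x) * G (X22 x) \<partial>M)"
      by (rule nn_integral_add) measurable
    also have "(\<integral>\<^sup>+x. a1 * a2 + a1 * G (X22 x) + a2 * F (X11 x) \<partial>M)
        = (\<integral>\<^sup>+x. a1 * a2 + a1 * G (X22 x) \<partial>M) + (\<integral>\<^sup>+x. a2 * F (X11 x) \<partial>M)"
      by (rule nn_integral_add) measurable
    also have "(\<integral>\<^sup>+x. a1 * a2 + a1 * G (X22 x) \<partial>M) = (\<integral>\<^sup>+x. a1 * a2 \<partial>M) + (\<integral>\<^sup>+x. a1 * G (X22 x) \<partial>M)"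
      by (rule nn_integral_add) measurable
    also have "(\<integral>\<^sup>+x. a1 * G (X22 x) \<partial>M) = a1 * (\<integral>\<^sup>+x. G (X22 x) \<partial>M)"
      by (rule nn_integral_cmult) measurable
    also have "(\<integral>\<^sup>+x. a2 * F (X11 x) \<partial>M) = a2 * (\<integral>\<^sup>+x. F (X11 x) \<partial>M)"
      by (rule nn_integral_cmult) measurable
    also have "(\<integral>\<^sup>+x. a1 * a2 \<partial>M) = a1 * a2" by (simp add: M.emeasure_space_1)
    finally show ?thesis .
  qed
  have RHS1: "(\<integral>\<^sup>+y. ennreal (f (Y11 y)) \<partial>N) = a1 + (\<integral>\<^sup>+y. F (Y11 y) \<partial>N)"
  proof -
    have "(\<integral>\<^sup>+y. ennreal (f (Y11 y)) \<partial>N) = (\<integral>\<^sup>+y. a1 + F (Y11 y) \<partial>N)"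
      by (intro nn_integral_cong) (simp add: fY)
    also have "\<dots> = (\<integral>\<^sup>+y. a1 \<partial>N) + (\<integral>\<^sup>+y. F (Y11 y) \<partial>N)"
      by (rule nn_integral_add) measurable
    finally show ?thesis by (simp add: N.emeasure_space_1)
  qed
  have RHS2: "(\<integral>\<^sup>+y. ennreal (g (Y22 y)) \<partial>N) = a2 + (\<integral>\<^sup>+y. G (Y22 y) \<partial>N)"
  proof -
    have "(\<integral>\<^sup>+y. ennreal (g (Y22 y)) \<partial>N) = (\<integral>\<^sup>+y. a2 + G (Y22 y) \<partial>N)"
      by (intro nn_integral_cong) (simp add: fY)
    also have "\<dots> = (\<integral>\<^sup>+y. a2 \<partial>N) + (\<integral>\<^sup>+y. G (Y22 y) \<partial>N)"
      by (rule nn_integral_add) measurable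
    finally show ?thesis by (simp add: N.emeasure_space_1)
  qed
  have ennineq: "(\<integral>\<^sup>+y. ennreal (f (Y11 y)) \<partial>N) * (\<integral>\<^sup>+y. ennreal (g (Y22 y)) \<partial>N)
      \<le> (\<integral>\<^sup>+x. ennreal (f (X11 x) * g (X22 x)) \<partial>M)"
    unfolding LHS RHS1 RHS2 mF mG using key
    by (simp add: algebra_simps add_left_mono)
  have fnn: "AE x in M. 0 \<le> f (X11 x) * g (X22 x)"
    using pdX1 bv1(2) bv2(2) by (intro AE_I2) auto
  have e1: "(\<integral>\<^sup>+x. ennreal (f (X11 x) * g (X22 x)) \<partial>M) = ennreal (\<integral>x. f (X11 x) * g (X22 x) \<partial>M)"
    by (rule nn_integral_eq_integral[OF assms(15) fnn])
  have e2: "(\<integral>\<^sup>+y. ennreal (f (Y11 y)) \<partial>N) = ennreal (\<integral>y. f (Y11 y) \<partial>N)"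
    using pdY1 bv1(2) by (intro nn_integral_eq_integral[OF assms(16)] AE_I2) auto
  have e3: "(\<integral>\<^sup>+y. ennreal (g (Y22 y)) \<partial>N) = ennreal (\<integral>y. g (Y22 y) \<partial>N)"
    using pdY1 bv2(2) by (intro nn_integral_eq_integral[OF assms(17)] AE_I2) auto
  have i0: "0 \<le> (\<integral>y. f (Y11 y) \<partial>N)" "0 \<le> (\<integral>x. f (X11 x) * g (X22 x) \<partial>M)"
    using pdY1 bv1(2) fnn by (auto intro!: integral_nonneg_AE AE_I2)
  have "ennreal ((\<integral>y. f (Y11 y) \<partial>N) * (\<integral>y. g (Y22 y) \<partial>N)) \<le> ennreal (\<integral>x. f (X11 x) * g (X22 x) \<partial>M)"
    using ennineq unfolding e1 e2 e3 using i0 by (simp add: ennreal_mult')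
  then show ?thesis using i0 by (simp add: ennreal_le_iff)
qed

end
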